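(* Let $(G,\cdot)$ be a group, $\epsilon\in\{1,-1\}$, and $\psi_1,\psi_2\in\operatorname{End}(G,\cdot)$. Suppose either $\epsilon=-1$ and both $\psi_i$ satisfy $\psi_i([[G,\psi_i],G])\le Z(G,\cdot)$, or $\epsilon=1$ and both $\psi_i$ satisfy $\psi_i([\psi_i(G),G])\le Z(G,\cdot)$. For $i=1,2$ let $N_i=\{h\mapsto g\cdot\psi_i(g)^{\epsilon}\cdot h\cdot\psi_i(g)^{-\epsilon} : g\in G\}\subseteq\operatorname{Perm}(G)$ (a regular subgroup under these hypotheses). Then $N_1=N_2$ if and only if $\psi_1(g)\cdot\psi_2(g)^{-1}\in Z(G,\cdot)$ for every $g\in G$.
   Context: $\operatorname{Perm}(G)$ is the group of permutations of the set $G$. For $\psi\in\operatorname{End}(G,\cdot)$, $[g,\psi]=g\cdot\psi(g)^{-1}$ and $[G,\psi]$ is the subgroup generated by these elements. Commutators are $[x,y]=xyx^{-1}y^{-1}$ and $[A,B]$ is the subgroup generated by $[a,b]$, $a\in A$, $b\in B$. $Z(G,\cdot)$ is the centre. *)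

theory Defs
  imports "HOL-Algebra.Algebra"
begin

definition grp_center :: "('a, 'b) monoid_scheme \<Rightarrow> 'a set" where
  "grp_center G = {z \<in> carrier G. \<forall>x \<in> carrier G. z \<otimes>\<^bsub>G\<^esub> x = x \<otimes>\<^bsub>G\<^esub> z}"

definition comm_subgroup :: "('a, 'b) monoid_scheme \<Rightarrow> 'a set \<Rightarrow> 'a set \<Rightarrow> 'a set" where
  "comm_subgroup G A B = generate G
     {a \<otimes>\<^bsub>G\<^esub> b \<otimes>\<^bsub>G\<^esub> inv\<^bsub>G\<^esub> a \<otimes>\<^bsub>G\<^esub> inv\<^bsub>G\<^esub> b | a b. a \<in> A \<and> b \<in> B}"

definition endo_comm :: "('a, 'b) monoid_scheme \<Rightarrow> ('a \<Rightarrow> 'a) \<Rightarrow> 'a set" where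
  "endo_comm G \<psi> = generate G {g \<otimes>\<^bsub>G\<^esub> inv\<^bsub>G\<^esub> (\<psi> g) | g. g \<in> carrier G}"

definition N_set :: "('a, 'b) monoid_scheme \<Rightarrow> int \<Rightarrow> ('a \<Rightarrow> 'a) \<Rightarrow> ('a \<Rightarrow> 'a) set" where
  "N_set G \<epsilon> \<psi> = {(\<lambda>h \<in> carrier G. g \<otimes>\<^bsub>G\<^esub> (\<psi> g [^]\<^bsub>G\<^esub> \<epsilon>) \<otimes>\<^bsub>G\<^esub> h
                         \<otimes>\<^bsub>G\<^esub> (\<psi> g [^]\<^bsub>G\<^esub> (- \<epsilon>))) | g. g \<in> carrier G}"

end

theory Submission
  imports Defs
begin

lemma (in group) cancel_aux [simp]:
  "a \<in> carrier G \<Longrightarrow> y \<in> carrier G \<Longrightarrow> a \<otimes> (inv a \<otimes> y) = y"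
  "a \<in> carrier G \<Longrightarrow> y \<in> carrier G \<Longrightarrow> inv a \<otimes> (a \<otimes> y) = y"
  by (simp_all add: m_assoc[symmetric])

lemma (in group) center_conj:
  assumes "z \<in> grp_center G" "c \<in> carrier G"
  shows "c \<otimes> z \<otimes> inv c = z"
proof -
  have z: "z \<in> carrier G" "c \<otimes> z = z \<otimes> c" using assms unfolding grp_center_def by auto
  then show ?thesis using assms(2) by (simp add: m_assoc)
qed

lemma (in group) center_inv:
  assumes "z \<in> grp_center G"
  shows "inv z \<in> grp_center G"
proof -
  have z: "z \<in> carrier G" "\<And>x. x \<in> carrier G \<Longrightarrow> z \<otimes> x = x \<otimes> z"
    using assms unfolding grp_center_def by auto
  have "inv z \<otimes> x = x \<otimes> inv z" if x: "x \<in> carrier G" for x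
  proof -
    have "inv z \<otimes> x = inv z \<otimes> (x \<otimes> z) \<otimes> inv z" using z(1) x by (simp add: m_assoc)
    also have "\<dots> = inv z \<otimes> (z \<otimes> x) \<otimes> inv z" by (simp only: z(2)[OF x])
    also have "\<dots> = x \<otimes> inv z" using z(1) x by simp
    finally show ?thesis .
  qed
  then show ?thesis using z unfolding grp_center_def by auto
qed

lemma (in group) center_swap:
  assumes "a \<in> carrier G" "b \<in> carrier G" "a \<otimes> inv b \<in> grp_center G"
  shows "inv b \<otimes> a \<in> grp_center G"
proof -
  have "inv b \<otimes> (a \<otimes> inv b) \<otimes> inv (inv b) = inv b \<otimes> a"
    using assms by (simp add: m_assoc)
  with center_conj[OF assms(3), of "inv b"] assms show ?thesis by simp
qed

lemma (in group) center_swap2: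
  assumes "a \<in> carrier G" "b \<in> carrier G" "inv b \<otimes> a \<in> grp_center G"
  shows "a \<otimes> inv b \<in> grp_center G"
proof -
  have "b \<otimes> (inv b \<otimes> a) \<otimes> inv b = a \<otimes> inv b"
    using assms by (simp add: m_assoc[symmetric])
  with center_conj[OF assms(3), of "b"] assms show ?thesis by simp
qed

lemma (in group) conj_eq_center:
  assumes a: "a \<in> carrier G" and b: "b \<in> carrier G"
  shows "(\<forall>h\<in>carrier G. a \<otimes> h \<otimes> inv a = b \<otimes> h \<otimes> inv b) \<longleftrightarrow> a \<otimes> inv b \<in> grp_center G"
proof
  assume H: "\<forall>h\<in>carrier G. a \<otimes> h \<otimes> inv a = b \<otimes> h \<otimes> inv b"
  have "a \<otimes> inv b \<otimes> x = x \<otimes> (a \<otimes> inv b)" if x: "x \<in> carrier G" for x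
  proof -
    have e: "a \<otimes> (inv b \<otimes> x \<otimes> b) \<otimes> inv a = x"
      using H[rule_format, of "inv b \<otimes> x \<otimes> b"] a b x by (simp add: m_assoc)
    have "a \<otimes> inv b \<otimes> x = a \<otimes> (inv b \<otimes> x \<otimes> b) \<otimes> inv a \<otimes> (a \<otimes> inv b)"
      using a b x by (simp add: m_assoc)
    also have "\<dots> = x \<otimes> (a \<otimes> inv b)" using e by simp
    finally show ?thesis .
  qed
  then show "a \<otimes> inv b \<in> grp_center G" using a b unfolding grp_center_def by auto
next
  assume Z: "a \<otimes> inv b \<in> grp_center G"
  show "\<forall>h\<in>carrier G. a \<otimes> h \<otimes> inv a = b \<otimes> h \<otimes> inv b"
  proof
    fix h assume h: "h \<in> carrier G"
    have "a = (a \<otimes> inv b) \<otimes> b" using a b by (simp add: m_assoc)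
    hence "a \<otimes> h \<otimes> inv a = (a \<otimes> inv b) \<otimes> (b \<otimes> h \<otimes> inv b) \<otimes> inv (a \<otimes> inv b)"
      using a b h by (simp add: m_assoc inv_mult_group)
    also have "\<dots> = b \<otimes> h \<otimes> inv b"
    proof -
      define y where "y = b \<otimes> h \<otimes> inv b"
      have y: "y \<in> carrier G" using a b h y_def by simp
      have zc: "a \<otimes> inv b \<in> carrier G" using a b by simp
      have "(a \<otimes> inv b) \<otimes> y = y \<otimes> (a \<otimes> inv b)" using Z y unfolding grp_center_def by blast
      hence "(a \<otimes> inv b) \<otimes> y \<otimes> inv (a \<otimes> inv b) = y \<otimes> (a \<otimes> inv b) \<otimes> inv (a \<otimes> inv b)" by simp
      also have "\<dots> = y" using y zc by (simp add: m_assoc)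
      finally show ?thesis unfolding y_def .
    qed
    finally show "a \<otimes> h \<otimes> inv a = b \<otimes> h \<otimes> inv b" .
  qed
qed

lemma (in group) main_aux:
  assumes "\<epsilon> \<in> {1, -1}"
    and "\<psi>1 \<in> hom G G" and "\<psi>2 \<in> hom G G"
  shows "N_set G \<epsilon> \<psi>1 = N_set G \<epsilon> \<psi>2 \<longleftrightarrow>
         (\<forall>g \<in> carrier G. \<psi>1 g \<otimes> inv (\<psi>2 g) \<in> grp_center G)"
proof -
  have c1: "\<And>g. g \<in> carrier G \<Longrightarrow> \<psi>1 g \<in> carrier G" using assms(2) by (auto simp: hom_def)
  have c2: "\<And>g. g \<in> carrier G \<Longrightarrow> \<psi>2 g \<in> carrier G" using assms(3) by (auto simp: hom_def)
  define f where "f = (\<lambda>(a::'a) g. (\<lambda>h \<in> carrier G. g \<otimes>\<^bsub>G\<^esub> a \<otimes>\<^bsub>G\<^esub> h \<otimes>\<^bsub>G\<^esub> inv\<^bsub>G\<^esub> a))"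
  have Nf: "N_set G \<epsilon> \<psi> = {f (\<psi> g [^] \<epsilon>) g | g. g \<in> carrier G}"
    if "\<And>g. g \<in> carrier G \<Longrightarrow> \<psi> g \<in> carrier G" for \<psi>
  proof -
    have e: "(\<lambda>h\<in>carrier G. g \<otimes> \<psi> g [^] \<epsilon> \<otimes> h \<otimes> \<psi> g [^] - \<epsilon>) = f (\<psi> g [^] \<epsilon>) g"
      if "g \<in> carrier G" for g using that \<open>\<And>g. g \<in> carrier G \<Longrightarrow> \<psi> g \<in> carrier G\<close>
      by (simp add: f_def int_pow_neg)
    show ?thesis unfolding N_set_def
      apply (rule Collect_cong)
      apply (rule ex_cong1)
      using e by auto
  qed
  have pw: "\<psi>1 g [^] \<epsilon> \<otimes> inv (\<psi>2 g [^] \<epsilon>) \<in> grp_center G \<longleftrightarrow> \<psi>1 g \<otimes> inv (\<psi>2 g) \<in> grp_center G"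
    if g: "g \<in> carrier G" for g
  proof (cases "\<epsilon> = 1")
    case True then show ?thesis using c1 c2 g by simp
  next
    case False
    hence e: "\<epsilon> = -1" using assms(1) by auto
    have x: "\<psi>1 g \<in> carrier G" and y: "\<psi>2 g \<in> carrier G" using c1 c2 g by auto
    have "\<psi>1 g [^] \<epsilon> = inv (\<psi>1 g)" "\<psi>2 g [^] \<epsilon> = inv (\<psi>2 g)"
      using x y e int_pow_neg[of _ 1] by auto
    moreover have "inv (\<psi>1 g) \<otimes> \<psi>2 g \<in> grp_center G \<longleftrightarrow> \<psi>1 g \<otimes> inv (\<psi>2 g) \<in> grp_center G"
    proof
      assume A: "inv (\<psi>1 g) \<otimes> \<psi>2 g \<in> grp_center G"
      have "inv (inv (\<psi>1 g) \<otimes> \<psi>2 g) = inv (\<psi>2 g) \<otimes> \<psi>1 g" using x y by (simp add: inv_mult_group)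
      with center_inv[OF A] have "inv (\<psi>2 g) \<otimes> \<psi>1 g \<in> grp_center G" by simp
      then show "\<psi>1 g \<otimes> inv (\<psi>2 g) \<in> grp_center G" using center_swap2 x y by blast
    next
      assume A: "\<psi>1 g \<otimes> inv (\<psi>2 g) \<in> grp_center G"
      have B: "inv (\<psi>2 g) \<otimes> \<psi>1 g \<in> grp_center G" using center_swap[OF x y A] .
      have "inv (inv (\<psi>2 g) \<otimes> \<psi>1 g) = inv (\<psi>1 g) \<otimes> \<psi>2 g" using x y by (simp add: inv_mult_group)
      with center_inv[OF B] show "inv (\<psi>1 g) \<otimes> \<psi>2 g \<in> grp_center G" by simp
    qed
    ultimately show ?thesis using x y by simp
  qed
  have feq: "f a g = f b g' \<longleftrightarrow> g = g' \<and> a \<otimes> inv b \<in> grp_center G"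
    if a: "a \<in> carrier G" and b: "b \<in> carrier G" and g: "g \<in> carrier G" and g': "g' \<in> carrier G"
    for a b g g'
  proof
    assume E: "f a g = f b g'"
    have "f a g \<one> = f b g' \<one>" using E by simp
    hence gg: "g = g'" unfolding f_def using a b g g' by (simp add: m_assoc)
    have "\<forall>h\<in>carrier G. a \<otimes> h \<otimes> inv a = b \<otimes> h \<otimes> inv b"
    proof
      fix h assume h: "h \<in> carrier G"
      have "f a g h = f b g h" using E gg by simp
      hence "g \<otimes> (a \<otimes> h \<otimes> inv a) = g \<otimes> (b \<otimes> h \<otimes> inv b)"
        unfolding f_def using a b g h by (simp add: m_assoc)
      then show "a \<otimes> h \<otimes> inv a = b \<otimes> h \<otimes> inv b" using a b g h by simp
    qed
    then show "g = g' \<and> a \<otimes> inv b \<in> grp_center G" using conj_eq_center a b gg by blast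
  next
    assume "g = g' \<and> a \<otimes> inv b \<in> grp_center G"
    then have gg: "g = g'" and H: "\<forall>h\<in>carrier G. a \<otimes> h \<otimes> inv a = b \<otimes> h \<otimes> inv b"
      using conj_eq_center a b by blast+
    show "f a g = f b g'"
    proof
      fix h show "f a g h = f b g' h"
      proof (cases "h \<in> carrier G")
        case True
        then show ?thesis unfolding f_def using H[rule_format, OF True] gg a b g
          by (simp add: m_assoc)
      qed (simp add: f_def)
    qed
  qed
  show ?thesis
  proof
    assume NE: "N_set G \<epsilon> \<psi>1 = N_set G \<epsilon> \<psi>2"
    show "\<forall>g \<in> carrier G. \<psi>1 g \<otimes> inv (\<psi>2 g) \<in> grp_center G"
    proof
      fix g assume g: "g \<in> carrier G"
      have "f (\<psi>1 g [^] \<epsilon>) g \<in> N_set G \<epsilon> \<psi>2" using NE Nf[OF c1] g by auto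
      then obtain g' where g': "g' \<in> carrier G" and E: "f (\<psi>1 g [^] \<epsilon>) g = f (\<psi>2 g' [^] \<epsilon>) g'"
        using Nf[OF c2] by auto
      from feq[OF _ _ g g'] E c1 c2 g g' have "g = g'" and
        "\<psi>1 g [^] \<epsilon> \<otimes> inv (\<psi>2 g' [^] \<epsilon>) \<in> grp_center G" by auto
      then show "\<psi>1 g \<otimes> inv (\<psi>2 g) \<in> grp_center G" using pw g by simp
    qed
  next
    assume Z: "\<forall>g \<in> carrier G. \<psi>1 g \<otimes> inv (\<psi>2 g) \<in> grp_center G"
    have E: "f (\<psi>1 g [^] \<epsilon>) g = f (\<psi>2 g [^] \<epsilon>) g" if g: "g \<in> carrier G" for g
      using feq[of "\<psi>1 g [^] \<epsilon>" "\<psi>2 g [^] \<epsilon>" g g] pw[OF g] Z g c1 c2 by auto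
    have "{f (\<psi>1 g [^] \<epsilon>) g |g. g \<in> carrier G} = {f (\<psi>2 g [^] \<epsilon>) g |g. g \<in> carrier G}"
      apply (rule Collect_cong, rule ex_cong1) using E by auto
    then show "N_set G \<epsilon> \<psi>1 = N_set G \<epsilon> \<psi>2" using Nf[OF c1] Nf[OF c2] by simp
  qed
qed


theorem mainTheorem3:
  fixes G :: "('a, 'b) monoid_scheme" and \<epsilon> :: int and \<psi>1 \<psi>2 :: "'a \<Rightarrow> 'a"
  assumes "group G"
    and "\<epsilon> \<in> {1, -1}"
    and "\<psi>1 \<in> hom G G" and "\<psi>2 \<in> hom G G"
    and "(\<epsilon> = -1 \<and> (\<forall>\<psi> \<in> {\<psi>1, \<psi>2}.
              \<psi> ` comm_subgroup G (endo_comm G \<psi>) (carrier G) \<subseteq> grp_center G))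
       \<or> (\<epsilon> = 1 \<and> (\<forall>\<psi> \<in> {\<psi>1, \<psi>2}.
              \<psi> ` comm_subgroup G (\<psi> ` carrier G) (carrier G) \<subseteq> grp_center G))"
  shows "N_set G \<epsilon> \<psi>1 = N_set G \<epsilon> \<psi>2 \<longleftrightarrow>
         (\<forall>g \<in> carrier G. \<psi>1 g \<otimes>\<^bsub>G\<^esub> inv\<^bsub>G\<^esub> (\<psi>2 g) \<in> grp_center G)"
  using group.main_aux[OF assms(1) assms(2) assms(3) assms(4)] .

end
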